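(* Let $p_\beta$ be a probability distribution on $\mathbb{R}$ with finite second moment such that $\mathbb{P}(B\neq0)\neq0$ for $B\sim p_\beta$. For $\sigma>0$ and $\tau\ge0$ let \[ R_B(\sigma,\tau;p_\beta)=\mathbb{E}\big[(\eta(B+\sigma W;\tau)-B)^2\big], \] where $B\sim p_\beta$ and $W\sim N(0,1)$ are independent and $\eta(a;\tau)=(|a|-\tau)_+\mathrm{sign}(a)$. Then $\sigma\mapsto\inf_{\tau} R_{B} (\sigma, \tau; p_\beta)$ is an increasing function of $\sigma$. *)

theory Defs
  imports "HOL-Probability.Probability"
begin

definition soft_thresh :: "real \<Rightarrow> real \<Rightarrow> real" where
  "soft_thresh a \<tau> = max (\<bar>a\<bar> - \<tau>) 0 * sgn a"

definition std_normal :: "real measure" where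
  "std_normal = density lborel std_normal_density"

definition risk :: "real measure \<Rightarrow> real \<Rightarrow> real \<Rightarrow> real" where
  "risk p \<sigma> \<tau> =
     (\<integral>bw. (soft_thresh (fst bw + \<sigma> * snd bw) \<tau> - fst bw)\<^sup>2 \<partial>(p \<Otimes>\<^sub>M std_normal))"

end

theory Submission
  imports Defs "HOL-Real_Asymp.Real_Asymp"
begin

lemma utail_split:
  fixes g :: "real \<Rightarrow> real"
  assumes int: "integrable lborel g" and "a \<le> s"
  shows "(\<integral>x. indicator {s<..} x * g x \<partial>lborel) =
         (\<integral>x. indicator {a..} x * g x \<partial>lborel) - (\<integral>x. indicator {a..s} x * g x \<partial>lborel)"
proof -
  have "(\<lambda>x. indicator {a..} x * g x) = (\<lambda>x. indicator {a..s} x * g x + indicator {s<..} x * g x)"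
    using assms(2) by (auto simp: fun_eq_iff split: split_indicator)
  moreover have "integrable lborel (\<lambda>x. indicator {a..s} x * g x)"
    using integrable_mult_indicator[of "{a..s}" lborel g] int by simp
  moreover have "integrable lborel (\<lambda>x. indicator {s<..} x * g x)"
    using integrable_mult_indicator[of "{s<..}" lborel g] int by simp
  ultimately show ?thesis by simp
qed

lemma utail_deriv:
  fixes g :: "real \<Rightarrow> real"
  assumes cont: "continuous_on UNIV g" and int: "integrable lborel g"
  shows "((\<lambda>s. \<integral>x. indicator {s<..} x * g x \<partial>lborel) has_real_derivative - g t) (at t)"
proof -
  define a where "a = t - 1"
  define V where "V s = (\<integral>x. indicator {a..} x * g x \<partial>lborel) - integral {a..s} g" for s
  have eq: "(\<integral>x. indicator {s<..} x * g x \<partial>lborel) = V s" if "s \<in> {a<..}" for s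
  proof -
    have si: "set_integrable lborel {a..s} g"
      by (rule borel_integrable_atLeastAtMost') (auto intro: continuous_on_subset[OF cont])
    have "(\<integral>x. indicator {a..s} x * g x \<partial>lborel) = integral {a..s} g"
      using set_borel_integral_eq_integral(2)[OF si] by (simp add: set_lebesgue_integral_def)
    then show ?thesis using utail_split[OF int, of a s] that by (simp add: V_def)
  qed
  have "((\<lambda>s. integral {a..s} g) has_real_derivative g t) (at t within {a..t+1})"
    by (rule integral_has_real_derivative) (auto simp: a_def intro: continuous_on_subset[OF cont])
  then have "((\<lambda>s. integral {a..s} g) has_real_derivative g t) (at t)"
    using at_within_Icc_at[of a t "t+1"] by (simp add: a_def)
  then have "(V has_real_derivative - g t) (at t)"
    unfolding V_def by (auto intro!: derivative_eq_intros)
  then show ?thesis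
    apply (rule has_field_derivative_transform_within_open[where S="{a<..}"])
      apply (rule open_greaterThan)
     apply (simp add: a_def)
    apply (rule eq[symmetric])
    apply assumption
    done
qed

lemma utail_lim:
  fixes g :: "real \<Rightarrow> real"
  assumes int: "integrable lborel g"
  shows "((\<lambda>s. \<integral>x. indicator {s<..} x * g x \<partial>lborel) \<longlongrightarrow> 0) at_top"
proof -
  have 1: "((\<lambda>y. \<integral> x. indicator {.. y} x *\<^sub>R g x \<partial>lborel) \<longlongrightarrow> \<integral> x. g x \<partial>lborel) at_top"
    by (rule tendsto_integral_at_top[OF sets_lborel int])
  have 2: "((\<lambda>y. (\<integral> x. g x \<partial>lborel) - (\<integral> x. indicator {.. y} x *\<^sub>R g x \<partial>lborel)) \<longlongrightarrow> (\<integral> x. g x \<partial>lborel) - (\<integral> x. g x \<partial>lborel)) at_top"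
    by (rule tendsto_diff[OF tendsto_const 1])
  have 3: "(\<integral> x. g x \<partial>lborel) - (\<integral> x. indicator {.. y} x *\<^sub>R g x \<partial>lborel) = (\<integral>x. indicator {y<..} x * g x \<partial>lborel)" for y
  proof -
    have e: "(\<lambda>x. g x) = (\<lambda>x. indicator {..y} x * g x + indicator {y<..} x * g x)"
      by (auto simp: fun_eq_iff split: split_indicator)
    have i1: "integrable lborel (\<lambda>x. indicator {..y} x * g x)"
      using integrable_mult_indicator[of "{..y}" lborel g] int by simp
    have i2: "integrable lborel (\<lambda>x. indicator {y<..} x * g x)"
      using integrable_mult_indicator[of "{y<..}" lborel g] int by simp
    have "(\<integral> x. g x \<partial>lborel) = (\<integral>x. indicator {..y} x * g x \<partial>lborel) + (\<integral>x. indicator {y<..} x * g x \<partial>lborel)"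
      by (subst e) (rule Bochner_Integration.integral_add[OF i1 i2])
    then show ?thesis by simp
  qed
  show ?thesis using 2 unfolding 3 by simp
qed

abbreviation "phi \<equiv> std_normal_density"

definition Q :: "real \<Rightarrow> real" where
  "Q t = (\<integral>x. indicator {t<..} x * phi x \<partial>lborel)"

lemma phi_def': "phi x = exp (- x\<^sup>2 / 2) / sqrt (2 * pi)"
  by (simp add: std_normal_density_def)

lemma phi_pos: "phi x > 0" by (simp add: normal_density_pos)

lemma phi_cont: "continuous_on UNIV phi"
  unfolding normal_density_def by (intro continuous_intros) auto

lemma phi_deriv: "(phi has_real_derivative (- t * phi t)) (at t)"
  unfolding phi_def' by (auto intro!: derivative_eq_intros simp: field_simps power2_eq_square)

lemma phi_even: "phi (-x) = phi x" by (simp add: phi_def')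

lemma const_zero:
  fixes f :: "real \<Rightarrow> real"
  assumes "\<And>x. (f has_real_derivative 0) (at x)" and "(f \<longlongrightarrow> 0) at_top"
  shows "f x = 0"
proof -
  define c where "c = f x"
  have "\<And>y. f y = c" using assms(1) DERIV_isconst_all unfolding c_def by blast
  then have "f = (\<lambda>_::real. c)" by auto
  then have "((\<lambda>_::real. c) \<longlongrightarrow> 0) at_top" using assms(2) by (simp only:)
  then have "c = 0" by (simp add: tendsto_const_iff)
  then show ?thesis by (simp add: c_def)
qed

lemma int1: "integrable lborel (\<lambda>x. x * phi x)"
  using integrable_std_normal_moment[of 1] by (simp add: mult.commute)
lemma int2: "integrable lborel (\<lambda>x. x^2 * phi x)"
  using integrable_std_normal_moment[of 2] by (simp add: mult.commute)
lemma int0: "integrable lborel phi" by simp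

lemma tot0: "(\<integral>x. phi x \<partial>lborel) = 1" by simp
lemma tot1: "(\<integral>x. x * phi x \<partial>lborel) = 0"
  using integral_std_normal_moment_odd[of 0] by (simp add: mult.commute)
lemma tot2: "(\<integral>x. x^2 * phi x \<partial>lborel) = 1"
  using integral_std_normal_moment_even[of 1] by (simp add: mult.commute)

lemma Q_deriv: "(Q has_real_derivative - phi t) (at t)"
  unfolding Q_def[abs_def] by (rule utail_deriv[OF phi_cont int0])

lemma Q_lim: "(Q \<longlongrightarrow> 0) at_top"
  unfolding Q_def[abs_def] by (rule utail_lim[OF int0])

lemma phi_lim: "(phi \<longlongrightarrow> 0) at_top"
  unfolding phi_def' by real_asymp

lemma tphi_lim: "((\<lambda>t. t * phi t) \<longlongrightarrow> 0) at_top"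
  unfolding phi_def' by real_asymp

lemma tphi_deriv: "((\<lambda>z. z * phi z) has_real_derivative (phi s - s * (s * phi s))) (at s)"
  using phi_deriv[of s] by (auto intro!: derivative_eq_intros)

lemma U1: "(\<integral>x. indicator {t<..} x * (x * phi x) \<partial>lborel) = phi t"
proof -
  let ?f = "\<lambda>t. (\<integral>x. indicator {t<..} x * (x * phi x) \<partial>lborel) - phi t"
  have "?f t = 0"
  proof (rule const_zero[where f = ?f])
    fix s
    have c: "continuous_on UNIV (\<lambda>x. x * phi x)" by (intro continuous_intros phi_cont)
    show "(?f has_real_derivative 0) (at s)"
      using utail_deriv[OF c int1, of s] phi_deriv[of s]
      by (auto intro!: derivative_eq_intros)
  next
    show "(?f \<longlongrightarrow> 0) at_top"
      using tendsto_diff[OF utail_lim[OF int1] phi_lim] by simp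
  qed
  then show ?thesis by simp
qed

lemma U2: "(\<integral>x. indicator {t<..} x * (x^2 * phi x) \<partial>lborel) = t * phi t + Q t"
proof -
  let ?f = "\<lambda>t. (\<integral>x. indicator {t<..} x * (x^2 * phi x) \<partial>lborel) - (t * phi t + Q t)"
  have "?f t = 0"
  proof (rule const_zero[where f = ?f])
    fix s
    have c: "continuous_on UNIV (\<lambda>x. x^2 * phi x)" by (intro continuous_intros phi_cont)
    have "(?f has_real_derivative (- (s^2 * phi s) - ((phi s - s * (s * phi s)) + - phi s))) (at s)"
      using utail_deriv[OF c int2, of s] tphi_deriv[of s] Q_deriv[of s]
      by (intro derivative_intros) auto
    then show "(?f has_real_derivative 0) (at s)"
      by (simp add: algebra_simps power2_eq_square)
  next
    show "(?f \<longlongrightarrow> 0) at_top"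
      using tendsto_diff[OF utail_lim[OF int2] tendsto_add[OF tphi_lim Q_lim]] by simp
  qed
  then show ?thesis by simp
qed

lemma U0: "(\<integral>x. indicator {t<..} x * phi x \<partial>lborel) = Q t"
  by (simp add: Q_def)

lemma Q_nonneg: "Q t \<ge> 0"
  unfolding Q_def by (rule integral_nonneg_AE) (auto simp: phi_pos less_imp_le)

lemma Q_le1: "Q t \<le> 1"
proof -
  have "Q t \<le> (\<integral>x. phi x \<partial>lborel)"
    unfolding Q_def by (rule integral_mono[OF integrable_mult_indicator[of "{t<..}" lborel phi, simplified] int0])
      (auto simp: indicator_def less_imp_le[OF phi_pos])
  then show ?thesis by simp
qed

lemma Q_mono: "s \<le> t \<Longrightarrow> Q t \<le> Q s"
  by (rule DERIV_nonpos_imp_nonincreasing[of s t Q]) (auto intro: Q_deriv simp: less_imp_le[OF phi_pos])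

lemma ltail: "(\<integral>x. indicator {..s} x * phi x \<partial>lborel) = 1 - Q s"
proof -
  have e: "(\<lambda>x. phi x) = (\<lambda>x. indicator {..s} x * phi x + indicator {s<..} x * phi x)"
    by (auto simp: fun_eq_iff split: split_indicator)
  have i1: "integrable lborel (\<lambda>x. indicator {..s} x * phi x)"
    using integrable_mult_indicator[of "{..s}" lborel phi] int0 by simp
  have i2: "integrable lborel (\<lambda>x. indicator {s<..} x * phi x)"
    using integrable_mult_indicator[of "{s<..}" lborel phi] int0 by simp
  have "(\<integral> x. phi x \<partial>lborel) = (\<integral>x. indicator {..s} x * phi x \<partial>lborel) + (\<integral>x. indicator {s<..} x * phi x \<partial>lborel)"
    by (subst e) (rule Bochner_Integration.integral_add[OF i1 i2])
  then show ?thesis by (simp add: Q_def)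
qed

lemma ltail_bound:
  assumes "s < 0"
  shows "1 - Q s \<le> 1 / s^2"
proof -
  have i1: "integrable lborel (\<lambda>x. indicator {..s} x * phi x)"
    using integrable_mult_indicator[of "{..s}" lborel phi] int0 by simp
  have "(\<integral>x. indicator {..s} x * phi x \<partial>lborel) \<le> (\<integral>x. (1 / s^2) * (x^2 * phi x) \<partial>lborel)"
  proof (rule integral_mono[OF i1])
    show "integrable lborel (\<lambda>x. 1 / s\<^sup>2 * (x\<^sup>2 * phi x))" using int2 by simp
    fix x
    show "indicator {..s} x * phi x \<le> 1 / s\<^sup>2 * (x\<^sup>2 * phi x)"
    proof (cases "x \<le> s")
      case True
      have "(-s)^2 \<le> (-x)^2" using power_mono[of "-s" "-x" 2] True assms by simp
      then have "s^2 \<le> x^2" by simp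
      then have "1 \<le> x^2 / s^2" using assms by simp
      then have "1 * phi x \<le> x^2/s^2 * phi x" by (intro mult_right_mono) (auto simp: less_imp_le[OF phi_pos])
      then show ?thesis using True by (simp add: indicator_def)
    next
      case False then show ?thesis by (simp add: indicator_def less_imp_le[OF phi_pos])
    qed
  qed
  also have "\<dots> = 1 / s^2" using tot2 by simp
  finally show ?thesis using ltail by simp
qed

lemma Q_neg_lim: "((\<lambda>t. Q (-t)) \<longlongrightarrow> 1) at_top"
proof -
  have ev1: "\<forall>\<^sub>F t in at_top. 1 - 1 / t\<^sup>2 \<le> Q (- t)"
    using eventually_gt_at_top[of "0::real"]
  proof eventually_elim
    fix t :: real assume "0 < t"
    then show "1 - 1 / t\<^sup>2 \<le> Q (- t)" using ltail_bound[of "-t"] by simp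
  qed
  have ev2: "\<forall>\<^sub>F t in at_top. Q (- t) \<le> 1" by (simp add: Q_le1)
  have L: "((\<lambda>t::real. 1 / t\<^sup>2) \<longlongrightarrow> 0) at_top" by real_asymp
  have L2: "((\<lambda>t::real. 1 - 1 / t\<^sup>2) \<longlongrightarrow> 1) at_top"
    using tendsto_diff[OF tendsto_const[of "1::real"] L] by simp
  show ?thesis by (rule tendsto_sandwich[OF ev1 ev2 L2 tendsto_const])
qed

lemma Q_sym: "Q (-t) = 1 - Q t"
proof -
  let ?f = "\<lambda>t. Q (-t) + Q t - 1"
  have "?f t = 0"
  proof (rule const_zero[where f = ?f])
    fix s
    have "(?f has_real_derivative (- phi (-s) * (-1) + - phi s - 0)) (at s)"
      by (intro derivative_intros DERIV_chain2[OF Q_deriv] Q_deriv) 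
    then show "(?f has_real_derivative 0) (at s)" by (simp add: phi_even)
  next
    show "(?f \<longlongrightarrow> 0) at_top"
      using tendsto_diff[OF tendsto_add[OF Q_neg_lim Q_lim] tendsto_const[of 1]] by simp
  qed
  then show ?thesis by simp
qed

lemma Q_pos: "Q t > 0"
proof -
  obtain z where "t < z" "z < t + 1" "Q (t+1) - Q t = (t + 1 - t) * (- phi z)"
    using MVT2[of t "t+1" Q "\<lambda>x. - phi x"] Q_deriv by auto
  then show ?thesis using Q_nonneg[of "t+1"] phi_pos[of z] by simp
qed

lemma phi_mono: "0 \<le> x \<Longrightarrow> x \<le> y \<Longrightarrow> phi y \<le> phi x"
  unfolding phi_def' by (auto intro!: divide_right_mono simp: power_mono)

lemma phi_abs: "phi \<bar>x\<bar> = phi x"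
  by (cases "x \<ge> 0") (auto simp: phi_even)

lemma phi_mono_abs: "\<bar>x\<bar> \<le> \<bar>y\<bar> \<Longrightarrow> phi y \<le> phi x"
  using phi_mono[of "\<bar>x\<bar>" "\<bar>y\<bar>"] by (simp add: phi_abs)

lemma int_sq: "integrable lborel (\<lambda>x. (a * x + c)^2 * phi x)"
proof -
  have "(\<lambda>x. (a * x + c)^2 * phi x) = (\<lambda>x. a^2 * (x^2 * phi x) + (2*a*c) * (x * phi x) + c^2 * phi x)"
    by (auto simp: fun_eq_iff power2_eq_square algebra_simps)
  have "integrable lborel (\<lambda>x. a^2 * (x^2 * phi x) + (2*a*c) * (x * phi x) + c^2 * phi x)"
    using int0 int1 int2 by auto
  then show ?thesis using \<open>(\<lambda>x. (a * x + c)^2 * phi x) = _\<close> by (simp only:)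
qed

lemma int_sq_ind: "integrable lborel (\<lambda>x. indicator A x * ((a * x + c)^2 * phi x))"
  if "A \<in> sets borel"
  using integrable_mult_indicator[of A lborel "\<lambda>x. (a * x + c)^2 * phi x"] int_sq that by simp

lemma tot_sq: "(\<integral>x. (a * x + c)^2 * phi x \<partial>lborel) = a^2 + c^2"
proof -
  have e: "(\<lambda>x. (a * x + c)^2 * phi x) = (\<lambda>x. a^2 * (x^2 * phi x) + (2*a*c) * (x * phi x) + c^2 * phi x)"
    by (auto simp: fun_eq_iff power2_eq_square algebra_simps)
  have h1: "(\<integral>x. a^2 * (x^2 * phi x) + (2*a*c) * (x * phi x) + c^2 * phi x \<partial>lborel) =
     (\<integral>x. a^2 * (x^2 * phi x) + (2*a*c) * (x * phi x) \<partial>lborel) + (\<integral>x. c^2 * phi x \<partial>lborel)"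
    by (rule Bochner_Integration.integral_add) (use int0 int1 int2 in auto)
  have h2: "(\<integral>x. a^2 * (x^2 * phi x) + (2*a*c) * (x * phi x) \<partial>lborel) =
     (\<integral>x. a^2 * (x^2 * phi x) \<partial>lborel) + (\<integral>x. (2*a*c) * (x * phi x) \<partial>lborel)"
    by (rule Bochner_Integration.integral_add) (use int0 int1 int2 in auto)
  have h3: "(\<integral>x. a^2 * (x^2 * phi x) \<partial>lborel) = a^2" using tot2 by simp
  have h4: "(\<integral>x. (2*a*c) * (x * phi x) \<partial>lborel) = 0" using tot1 by simp
  have h5: "(\<integral>x. c^2 * phi x \<partial>lborel) = c^2" using tot0 by simp
  show ?thesis
    apply (subst e)
    apply (subst h1)
    apply (subst h2)
    apply (subst h3)
    apply (subst h4)
    apply (subst h5)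
    apply simp_all
    done
qed

lemma tail_sq: "(\<integral>x. indicator {t<..} x * ((a * x + c)^2 * phi x) \<partial>lborel) =
   a^2 * (t * phi t + Q t) + 2 * a * c * phi t + c^2 * Q t"
proof -
  let ?A = "\<lambda>x. indicator {t<..} x * (x^2 * phi x)"
  let ?B = "\<lambda>x. indicator {t<..} x * (x * phi x)"
  let ?C = "\<lambda>x. indicator {t<..} x * phi x"
  have e: "(\<lambda>x. indicator {t<..} x * ((a * x + c)^2 * phi x)) = (\<lambda>x. a^2 * ?A x + (2*a*c) * ?B x + c^2 * ?C x)"
    by (auto simp: fun_eq_iff power2_eq_square algebra_simps)
  have iA: "integrable lborel ?A"
    using integrable_mult_indicator[of "{t<..}" lborel "\<lambda>x. x^2 * phi x"] int2 by simp
  have iB: "integrable lborel ?B"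
    using integrable_mult_indicator[of "{t<..}" lborel "\<lambda>x. x * phi x"] int1 by simp
  have iC: "integrable lborel ?C"
    using integrable_mult_indicator[of "{t<..}" lborel "\<lambda>x. phi x"] int0 by simp
  have h1: "(\<integral>x. a^2 * ?A x + (2*a*c) * ?B x + c^2 * ?C x \<partial>lborel)
      = (\<integral>x. a^2 * ?A x + (2*a*c) * ?B x \<partial>lborel) + (\<integral>x. c^2 * ?C x \<partial>lborel)"
    by (rule Bochner_Integration.integral_add) (use iA iB iC in auto)
  have h2: "(\<integral>x. a^2 * ?A x + (2*a*c) * ?B x \<partial>lborel) = (\<integral>x. a^2 * ?A x \<partial>lborel) + (\<integral>x. (2*a*c) * ?B x \<partial>lborel)"
    by (rule Bochner_Integration.integral_add) (use iA iB iC in auto)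
  have h3: "(\<integral>x. a^2 * ?A x \<partial>lborel) = a^2 * (t * phi t + Q t)"
    using U2[of t] by (simp only: integral_mult_right_zero)
  have h4: "(\<integral>x. (2*a*c) * ?B x \<partial>lborel) = 2*a*c * phi t"
    using U1[of t] by (simp only: integral_mult_right_zero)
  have h5: "(\<integral>x. c^2 * ?C x \<partial>lborel) = c^2 * Q t"
    using U0[of t] by (simp only: integral_mult_right_zero)
  show ?thesis
    apply (subst e)
    apply (subst h1)
    apply (subst h2)
    apply (subst h3)
    apply (subst h4)
    apply (subst h5)
    apply (rule refl)
    done
qed

definition tsq :: "real \<Rightarrow> real \<Rightarrow> real \<Rightarrow> real" where
  "tsq a c t = a^2 * (t * phi t + Q t) + 2 * a * c * phi t + c^2 * Q t"

definition FF :: "real \<Rightarrow> real \<Rightarrow> real \<Rightarrow> real" where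
  "FF \<sigma> \<tau> b = \<sigma>^2 + \<tau>^2 + tsq \<sigma> (-\<tau>) ((\<tau> - b)/\<sigma>) - b^2 * Q ((\<tau> - b)/\<sigma>)
      - tsq \<sigma> \<tau> ((-\<tau> - b)/\<sigma>) + b^2 * Q ((-\<tau> - b)/\<sigma>)"

lemma st_sq:
  assumes "\<tau> \<ge> 0"
  shows "(soft_thresh y \<tau> - b)^2 = (y - b + \<tau>)^2 + (if \<tau> < y then (y - b - \<tau>)^2 - b^2 else 0)
           - (if -\<tau> < y then (y - b + \<tau>)^2 - b^2 else 0)"
proof (cases "\<tau> < y")
  case True
  then show ?thesis using assms by (auto simp: soft_thresh_def sgn_if abs_if max_def algebra_simps)
next
  case False
  show ?thesis
  proof (cases "-\<tau> < y")
    case True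
    then have "soft_thresh y \<tau> = 0" using False by (auto simp: soft_thresh_def abs_if max_def)
    then show ?thesis using True False by simp
  next
    case F2: False
    then have "soft_thresh y \<tau> = y + \<tau>" using False assms
      by (auto simp: soft_thresh_def abs_if max_def sgn_if)
    then show ?thesis using F2 False by (simp add: algebra_simps)
  qed
qed

lemma measurable_st1[measurable]: "(\<lambda>y. soft_thresh y t) \<in> borel_measurable borel"
  unfolding soft_thresh_def by measurable

lemma F_eq:
  assumes s: "\<sigma> > 0" and t: "\<tau> \<ge> 0"
  shows "(\<integral>w. (soft_thresh (b + \<sigma> * w) \<tau> - b)^2 \<partial>std_normal) = FF \<sigma> \<tau> b"
proof -
  define t1 where "t1 = (\<tau> - b)/\<sigma>"
  define t3 where "t3 = (-\<tau> - b)/\<sigma>"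
  have c1: "(\<tau> < b + \<sigma> * w) = (w \<in> {t1<..})" for w
    using s by (auto simp: t1_def pos_divide_less_eq algebra_simps)
  have c3: "(-\<tau> < b + \<sigma> * w) = (w \<in> {t3<..})" for w
    using s by (auto simp: t3_def pos_divide_less_eq algebra_simps)
  let ?h = "\<lambda>w. (soft_thresh (b + \<sigma> * w) \<tau> - b)^2"
  have hm: "?h \<in> borel_measurable borel"
  proof -
    have "(\<lambda>w. soft_thresh (b + \<sigma> * w) \<tau>) \<in> borel_measurable borel"
      using measurable_st1 by measurable
    then show ?thesis by measurable
  qed
  have "(\<integral>w. ?h w \<partial>std_normal) = (\<integral>w. phi w * ?h w \<partial>lborel)"
    unfolding std_normal_def by (subst integral_density) (auto simp: hm)
  also have "(\<lambda>w. phi w * ?h w) = (\<lambda>w. (\<sigma> * w + \<tau>)^2 * phi w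
        + indicator {t1<..} w * ((\<sigma> * w + (-\<tau>))^2 * phi w) - b^2 * (indicator {t1<..} w * phi w)
        - indicator {t3<..} w * ((\<sigma> * w + \<tau>)^2 * phi w) + b^2 * (indicator {t3<..} w * phi w))"
  proof
    fix w
    show "phi w * ?h w = (\<sigma> * w + \<tau>)^2 * phi w
        + indicator {t1<..} w * ((\<sigma> * w + (-\<tau>))^2 * phi w) - b^2 * (indicator {t1<..} w * phi w)
        - indicator {t3<..} w * ((\<sigma> * w + \<tau>)^2 * phi w) + b^2 * (indicator {t3<..} w * phi w)"
      unfolding st_sq[OF t, of "b + \<sigma> * w" b] c1 c3
      by (auto simp: indicator_def algebra_simps)
  qed
  also have "(\<integral>w. (\<sigma> * w + \<tau>)^2 * phi w
        + indicator {t1<..} w * ((\<sigma> * w + (-\<tau>))^2 * phi w) - b^2 * (indicator {t1<..} w * phi w)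
        - indicator {t3<..} w * ((\<sigma> * w + \<tau>)^2 * phi w) + b^2 * (indicator {t3<..} w * phi w) \<partial>lborel)
     = (\<sigma>^2 + \<tau>^2) + tsq \<sigma> (-\<tau>) t1 - b^2 * Q t1 - tsq \<sigma> \<tau> t3 + b^2 * Q t3"
  proof -
    have i1: "integrable lborel (\<lambda>w. (\<sigma> * w + \<tau>)^2 * phi w)" by (rule int_sq)
    have i2: "integrable lborel (\<lambda>w. indicator {t1<..} w * ((\<sigma> * w + (-\<tau>))^2 * phi w))" by (rule int_sq_ind) simp
    have i3: "integrable lborel (\<lambda>w. b^2 * (indicator {t1<..} w * phi w))"
      using integrable_mult_indicator[of "{t1<..}" lborel phi] int0 by simp
    have i4: "integrable lborel (\<lambda>w. indicator {t3<..} w * ((\<sigma> * w + \<tau>)^2 * phi w))" by (rule int_sq_ind) simp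
    have i5: "integrable lborel (\<lambda>w. b^2 * (indicator {t3<..} w * phi w))"
      using integrable_mult_indicator[of "{t3<..}" lborel phi] int0 by simp
    have e3: "(\<integral>w. b^2 * (indicator {t1<..} w * phi w) \<partial>lborel) = b^2 * Q t1"
      using U0[of t1] by simp
    have e5: "(\<integral>w. b^2 * (indicator {t3<..} w * phi w) \<partial>lborel) = b^2 * Q t3"
      using U0[of t3] by simp
    show ?thesis
      using i1 i2 i3 i4 i5 tot_sq[of \<sigma> \<tau>] tail_sq[of t1 \<sigma> "-\<tau>"] tail_sq[of t3 \<sigma> \<tau>]
      by (simp add: tsq_def U0 del: power_minus_even)
  qed
  finally show ?thesis by (simp add: FF_def t1_def t3_def)
qed

lemma st_bound: "\<tau> \<ge> 0 \<Longrightarrow> (soft_thresh y \<tau> - b)^2 \<le> b^2 + (y - b)^2"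
proof -
  assume t: "\<tau> \<ge> 0"
  have "(soft_thresh y \<tau> = 0) \<or> (0 < soft_thresh y \<tau> \<and> soft_thresh y \<tau> \<le> y) \<or> (y \<le> soft_thresh y \<tau> \<and> soft_thresh y \<tau> < 0)"
    using t by (auto simp: soft_thresh_def max_def sgn_if abs_if)
  then show ?thesis
  proof (elim disjE conjE)
    assume "soft_thresh y \<tau> = 0" then show ?thesis by simp
  next
    assume a: "0 < soft_thresh y \<tau>" "soft_thresh y \<tau> \<le> y"
    show ?thesis
    proof (cases "soft_thresh y \<tau> \<ge> b")
      case True then have "(soft_thresh y \<tau> - b)^2 \<le> (y - b)^2" using a by (intro power_mono) auto
      then show ?thesis by (simp add: add_increasing)
    next
      case False then have "(b - soft_thresh y \<tau>)^2 \<le> b^2" using a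
        by (intro power_mono) auto
      then show ?thesis by (simp add: power2_commute add_increasing2)
    qed
  next
    assume a: "y \<le> soft_thresh y \<tau>" "soft_thresh y \<tau> < 0"
    show ?thesis
    proof (cases "soft_thresh y \<tau> \<le> b")
      case True then have "(b - soft_thresh y \<tau>)^2 \<le> (b - y)^2" using a by (intro power_mono) auto
      then show ?thesis by (simp add: power2_commute add_increasing)
    next
      case False then have "(soft_thresh y \<tau> - b)^2 \<le> (-b)^2" using a
        by (intro power_mono) auto
      then show ?thesis by (simp add: add_increasing2)
    qed
  qed
qed

lemma Q_cont: "continuous_on UNIV Q"
  by (rule continuous_at_imp_continuous_on) (auto intro: DERIV_continuous[OF Q_deriv])

lemma Q_meas[measurable]: "Q \<in> borel_measurable borel"
  by (rule borel_measurable_continuous_onI[OF Q_cont])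

lemma FF_meas[measurable]: "(\<lambda>b. FF \<sigma> \<tau> b) \<in> borel_measurable borel"
  unfolding FF_def tsq_def by measurable

lemma N_prob: "prob_space std_normal"
  unfolding std_normal_def by (rule prob_space_normal_density) simp

lemma N_int: "f \<in> borel_measurable borel \<Longrightarrow> integrable std_normal f \<longleftrightarrow> integrable lborel (\<lambda>w. phi w * f w)"
  unfolding std_normal_def by (subst integrable_density) auto

lemma N_integral: "f \<in> borel_measurable borel \<Longrightarrow> (\<integral>w. f w \<partial>std_normal) = (\<integral>w. phi w * f w \<partial>lborel)"
  unfolding std_normal_def by (subst integral_density) auto

lemma sets_N[simp, measurable_cong]: "sets std_normal = sets borel"
  unfolding std_normal_def by simp

lemma N_w2: "integrable std_normal (\<lambda>w. w^2)" "(\<integral>w. w^2 \<partial>std_normal) = 1"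
proof -
  show "integrable std_normal (\<lambda>w. w^2)"
    using int2 by (subst N_int) (simp_all add: mult.commute)
  show "(\<integral>w. w^2 \<partial>std_normal) = 1"
    using tot2 by (subst N_integral) (simp_all add: mult.commute)
qed

lemma H_meas: "(\<lambda>w. (soft_thresh (b + \<sigma> * w) \<tau> - b)^2) \<in> borel_measurable borel"
proof -
  have "(\<lambda>w. soft_thresh (b + \<sigma> * w) \<tau>) \<in> borel_measurable borel"
    using measurable_st1 by measurable
  then show ?thesis by measurable
qed

lemma H_meas_N: "(\<lambda>w. (soft_thresh (b + \<sigma> * w) \<tau> - b)^2) \<in> borel_measurable std_normal"
  using H_meas measurable_cong_sets[OF sets_N refl] by blast

lemma st_bound': "\<tau> \<ge> 0 \<Longrightarrow> (soft_thresh (b + \<sigma> * x) \<tau> - b)^2 \<le> b^2 + \<sigma>^2 * x^2"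
proof -
  assume t: "\<tau> \<ge> 0"
  have "(soft_thresh (b + \<sigma> * x) \<tau> - b)^2 \<le> b^2 + (b + \<sigma> * x - b)^2" by (rule st_bound[OF t])
  also have "(b + \<sigma> * x - b)^2 = \<sigma>^2 * x^2" by (simp add: power_mult_distrib)
  finally show ?thesis .
qed

lemma H_int: "\<tau> \<ge> 0 \<Longrightarrow> integrable std_normal (\<lambda>w. (soft_thresh (b + \<sigma> * w) \<tau> - b)^2)"
proof -
  assume t: "\<tau> \<ge> 0"
  interpret N: prob_space std_normal by (rule N_prob)
  have i: "integrable std_normal (\<lambda>w. b^2 + \<sigma>^2 * w^2)"
    using N_w2(1) by auto
  show ?thesis
  proof (rule Bochner_Integration.integrable_bound[OF i H_meas_N])
    show "AE x in std_normal. norm ((soft_thresh (b + \<sigma> * x) \<tau> - b)\<^sup>2) \<le> norm (b\<^sup>2 + \<sigma>\<^sup>2 * x\<^sup>2)"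
    proof (rule AE_I2)
      fix x
      have "0 \<le> b\<^sup>2 + \<sigma>\<^sup>2 * x\<^sup>2" by simp
      then show "norm ((soft_thresh (b + \<sigma> * x) \<tau> - b)\<^sup>2) \<le> norm (b\<^sup>2 + \<sigma>\<^sup>2 * x\<^sup>2)"
        using st_bound'[OF t, of b \<sigma> x] by (simp only: real_norm_def abs_of_nonneg zero_le_power2)
    qed
  qed
qed

lemma FF_nonneg: "\<sigma> > 0 \<Longrightarrow> \<tau> \<ge> 0 \<Longrightarrow> FF \<sigma> \<tau> b \<ge> 0"
proof -
  assume s: "\<sigma> > 0" and t: "\<tau> \<ge> 0"
  have "0 \<le> (\<integral>w. (soft_thresh (b + \<sigma> * w) \<tau> - b)^2 \<partial>std_normal)"
    by (rule integral_nonneg_AE) (rule AE_I2, rule zero_le_power2)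
  then show ?thesis using F_eq[OF s t] by simp
qed

lemma FF_le: "\<sigma> > 0 \<Longrightarrow> \<tau> \<ge> 0 \<Longrightarrow> FF \<sigma> \<tau> b \<le> b^2 + \<sigma>^2"
proof -
  assume s: "\<sigma> > 0" and t: "\<tau> \<ge> 0"
  interpret N: prob_space std_normal by (rule N_prob)
  have i: "integrable std_normal (\<lambda>w. b^2 + \<sigma>^2 * w^2)"
    using N_w2(1) by auto
  have "(\<integral>w. (soft_thresh (b + \<sigma> * w) \<tau> - b)^2 \<partial>std_normal) \<le> (\<integral>w. b^2 + \<sigma>^2 * w^2 \<partial>std_normal)"
    by (rule integral_mono[OF H_int[OF t] i st_bound'[OF t]])
  also have "(\<integral>w. b^2 + \<sigma>^2 * w^2 \<partial>std_normal) = b^2 + \<sigma>^2"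
  proof -
    have "(\<integral>w. b^2 + \<sigma>^2 * w^2 \<partial>std_normal) = (\<integral>w. b^2 \<partial>std_normal) + (\<integral>w. \<sigma>^2 * w^2 \<partial>std_normal)"
      by (rule Bochner_Integration.integral_add) (intro N.integrable_const, intro integrable_mult_right N_w2(1))
    also have "(\<integral>w. b^2 \<partial>std_normal) = b^2" by (simp add: N.prob_space)
    also have "(\<integral>w. \<sigma>^2 * w^2 \<partial>std_normal) = \<sigma>^2" using N_w2(2) by simp
    finally show ?thesis .
  qed
  finally show ?thesis using F_eq[OF s t] by simp
qed

lemma risk_eq:
  assumes P: "prob_space p" and S: "sets p = sets borel" and I: "integrable p (\<lambda>b. b^2)"
    and s: "\<sigma> > 0" and t: "\<tau> \<ge> 0"
  shows "integrable p (FF \<sigma> \<tau>)" "risk p \<sigma> \<tau> = (\<integral>b. FF \<sigma> \<tau> b \<partial>p)"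
proof -
  interpret p: prob_space p by (rule P)
  interpret N: prob_space std_normal by (rule N_prob)
  interpret PP: pair_prob_space p std_normal by standard
  have FFm: "FF \<sigma> \<tau> \<in> borel_measurable p"
    using FF_meas measurable_cong_sets[OF S refl] by blast
  show iF: "integrable p (FF \<sigma> \<tau>)"
  proof (rule Bochner_Integration.integrable_bound[OF _ FFm])
    show "integrable p (\<lambda>b. b^2 + \<sigma>^2)" using I by auto
    show "AE x in p. norm (FF \<sigma> \<tau> x) \<le> norm (x^2 + \<sigma>^2)"
      using FF_nonneg[OF s t] FF_le[OF s t] by auto
  qed
  let ?H = "\<lambda>bw. (soft_thresh (fst bw + \<sigma> * snd bw) \<tau> - fst bw)^2"
  have Hm: "?H \<in> borel_measurable (p \<Otimes>\<^sub>M std_normal)"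
  proof -
    have "sets (p \<Otimes>\<^sub>M std_normal) = sets (borel \<Otimes>\<^sub>M borel)"
      by (rule sets_pair_measure_cong[OF S sets_N])
    moreover have "?H \<in> borel_measurable (borel \<Otimes>\<^sub>M borel)"
    proof -
      have "(\<lambda>bw::real\<times>real. fst bw + \<sigma> * snd bw) \<in> borel_measurable (borel \<Otimes>\<^sub>M borel)" by measurable
      then have "(\<lambda>bw::real\<times>real. soft_thresh (fst bw + \<sigma> * snd bw) \<tau>) \<in> borel_measurable (borel \<Otimes>\<^sub>M borel)"
        using measurable_st1 by (rule measurable_compose)
      then show ?thesis by measurable
    qed
    ultimately show ?thesis using measurable_cong_sets[of "p \<Otimes>\<^sub>M std_normal" "borel \<Otimes>\<^sub>M borel" borel borel] by blast
  qed
  have inner: "(\<integral>w. norm (?H (b, w)) \<partial>std_normal) = FF \<sigma> \<tau> b" for b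
    using F_eq[OF s t, of b] by simp
  have iH: "integrable (p \<Otimes>\<^sub>M std_normal) ?H"
  proof (rule PP.Fubini_integrable[OF Hm])
    show "integrable p (\<lambda>x. \<integral>y. norm (?H (x, y)) \<partial>std_normal)"
      unfolding inner by (rule iF)
    show "AE x in p. integrable std_normal (\<lambda>y. ?H (x, y))"
      using H_int[OF t] by simp
  qed
  have "risk p \<sigma> \<tau> = integral\<^sup>L (p \<Otimes>\<^sub>M std_normal) ?H"
    unfolding risk_def ..
  also have "\<dots> = (\<integral>b. (\<integral>w. ?H (b, w) \<partial>std_normal) \<partial>p)"
    by (rule PP.integral_fst'[OF iH, symmetric])
  also have "\<dots> = (\<integral>b. FF \<sigma> \<tau> b \<partial>p)"
    using F_eq[OF s t] by simp
  finally show "risk p \<sigma> \<tau> = (\<integral>b. FF \<sigma> \<tau> b \<partial>p)" .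
qed

definition rho :: "real \<Rightarrow> real \<Rightarrow> real" where
  "rho \<mu> \<alpha> = 1 + \<alpha>^2 + tsq 1 (-\<alpha>) (\<alpha> - \<mu>) - \<mu>^2 * Q (\<alpha> - \<mu>) - tsq 1 \<alpha> (-\<alpha> - \<mu>) + \<mu>^2 * Q (-\<alpha> - \<mu>)"

lemma FF_scale0:
  assumes s: "\<sigma> > 0"
  shows "FF \<sigma> (\<alpha> * \<sigma>) (\<sigma> * \<mu>) = \<sigma>^2 * rho \<mu> \<alpha>"
proof -
  have e1: "(\<alpha> * \<sigma> - \<sigma> * \<mu>) / \<sigma> = \<alpha> - \<mu>" using s by (simp add: field_simps)
  have e3: "(- (\<alpha> * \<sigma>) - \<sigma> * \<mu>) / \<sigma> = - \<alpha> - \<mu>" using s by (simp add: field_simps)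
  show ?thesis unfolding FF_def e1 e3 rho_def tsq_def
    by (simp add: algebra_simps power2_eq_square)
qed

lemma FF_scale:
  assumes s: "\<sigma> > 0"
  shows "FF \<sigma> (\<alpha> * \<sigma>) b = \<sigma>^2 * rho (b / \<sigma>) \<alpha>"
  using FF_scale0[OF s, of \<alpha> "b / \<sigma>"] s by simp

lemma tsq_deriv:
  "((\<lambda>t. tsq 1 c t) has_real_derivative (- ((t + c)^2 * phi t))) (at t)"
  unfolding tsq_def
  by (rule derivative_eq_intros tphi_deriv Q_deriv phi_deriv refl | simp)+
     (simp add: algebra_simps power2_eq_square)

lemma rho_deriv:
  "((\<lambda>m. rho m \<alpha>) has_real_derivative (2 * \<mu> * (Q (-\<alpha> - \<mu>) - Q (\<alpha> - \<mu>)))) (at \<mu>)"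
proof -
  have d1: "((\<lambda>m. tsq 1 (-\<alpha>) (\<alpha> - m)) has_real_derivative (- ((\<alpha> - \<mu> + (-\<alpha>))^2 * phi (\<alpha> - \<mu>))) * (-1)) (at \<mu>)"
    by (rule DERIV_chain2[OF tsq_deriv]) (auto intro!: derivative_eq_intros)
  have d3: "((\<lambda>m. tsq 1 \<alpha> (-\<alpha> - m)) has_real_derivative (- ((-\<alpha> - \<mu> + \<alpha>)^2 * phi (-\<alpha> - \<mu>))) * (-1)) (at \<mu>)"
    by (rule DERIV_chain2[OF tsq_deriv]) (auto intro!: derivative_eq_intros)
  have l1: "((\<lambda>m. \<alpha> - m) has_real_derivative -1) (at \<mu>)" by (auto intro!: derivative_eq_intros)
  have l3: "((\<lambda>m. -\<alpha> - m) has_real_derivative -1) (at \<mu>)" by (auto intro!: derivative_eq_intros)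
  have q1: "((\<lambda>m. Q (\<alpha> - m)) has_real_derivative phi (\<alpha> - \<mu>)) (at \<mu>)"
    using DERIV_chain2[OF Q_deriv l1] by simp
  have q3: "((\<lambda>m. Q (-\<alpha> - m)) has_real_derivative phi (-\<alpha> - \<mu>)) (at \<mu>)"
    using DERIV_chain2[OF Q_deriv l3] by simp
  have "((\<lambda>m. rho m \<alpha>) has_real_derivative
      0 + (- ((\<alpha> - \<mu> + (-\<alpha>))^2 * phi (\<alpha> - \<mu>))) * (-1)
        - ((2 * \<mu>) * Q (\<alpha> - \<mu>) + \<mu>^2 * phi (\<alpha> - \<mu>))
        - (- ((-\<alpha> - \<mu> + \<alpha>)^2 * phi (-\<alpha> - \<mu>))) * (-1)
        + ((2 * \<mu>) * Q (-\<alpha> - \<mu>) + \<mu>^2 * phi (-\<alpha> - \<mu>))) (at \<mu>)"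
    unfolding rho_def
    by (intro DERIV_add DERIV_diff DERIV_mult d1 d3 q1 q3 DERIV_const)
       (auto intro!: derivative_eq_intros simp: q1 q3)
  then show ?thesis by (simp add: algebra_simps power2_eq_square)
qed

definition KK :: "real \<Rightarrow> real \<Rightarrow> real" where
  "KK \<mu> \<alpha> = 1 + \<alpha>^2 + tsq 1 (-\<alpha>) (\<alpha> - \<mu>) - tsq 1 \<alpha> (-\<alpha> - \<mu>)"

lemma G_deriv:
  assumes s: "s > 0"
  shows "((\<lambda>s. FF s (\<alpha> * s) b) has_real_derivative 2 * s * KK (b / s) \<alpha>) (at s)"
proof -
  have inner: "((\<lambda>s. b / s) has_real_derivative (- b / s^2)) (at s)"
    using s by (auto intro!: derivative_eq_intros simp: power2_eq_square)
  have r: "((\<lambda>s. rho (b / s) \<alpha>) has_real_derivative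
      (2 * (b / s) * (Q (-\<alpha> - b / s) - Q (\<alpha> - b / s))) * (- b / s^2)) (at s)"
    by (rule DERIV_chain2[OF rho_deriv inner])
  have "((\<lambda>s. s^2 * rho (b / s) \<alpha>) has_real_derivative
      (2 * s) * rho (b / s) \<alpha> + s^2 * ((2 * (b / s) * (Q (-\<alpha> - b / s) - Q (\<alpha> - b / s))) * (- b / s^2))) (at s)"
    by (rule DERIV_mult'[OF _ r, of "\<lambda>s. s^2" "2 * s", simplified add.commute]) (auto intro!: derivative_eq_intros)
  moreover have "(2 * s) * rho (b / s) \<alpha> + s^2 * ((2 * (b / s) * (Q (-\<alpha> - b / s) - Q (\<alpha> - b / s))) * (- b / s^2))
     = 2 * s * KK (b / s) \<alpha>"
    using s unfolding rho_def KK_def by (simp add: field_simps power2_eq_square)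
  ultimately have d: "((\<lambda>s. s^2 * rho (b / s) \<alpha>) has_real_derivative 2 * s * KK (b / s) \<alpha>) (at s)"
    by simp
  show ?thesis
    apply (rule has_field_derivative_transform_within_open[OF d, where S="{0<..}"])
      apply (rule open_greaterThan)
    using s apply simp
    using FF_scale by simp
qed

lemma tsq_int: "tsq 1 c t = (\<integral>x. indicator {t<..} x * ((1 * x + c)^2 * phi x) \<partial>lborel)"
  unfolding tail_sq tsq_def by simp

lemma tsq_lower:
  assumes "t \<le> T" "\<alpha> \<le> T"
  shows "Q (T + 1) \<le> tsq 1 (-\<alpha>) t"
proof -
  have "Q (T + 1) = (\<integral>x. indicator {T+1<..} x * phi x \<partial>lborel)" by (simp add: Q_def)
  also have "\<dots> \<le> (\<integral>x. indicator {t<..} x * ((1 * x + (-\<alpha>))^2 * phi x) \<partial>lborel)"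
  proof (rule integral_mono)
    show "integrable lborel (\<lambda>x. indicator {T + 1<..} x * phi x)"
      using integrable_mult_indicator[of "{T+1<..}" lborel phi] int0 by simp
    show "integrable lborel (\<lambda>x. indicator {t<..} x * ((1 * x + - \<alpha>)\<^sup>2 * phi x))"
      by (rule int_sq_ind) simp
    fix x
    show "indicator {T + 1<..} x * phi x \<le> indicator {t<..} x * ((1 * x + - \<alpha>)\<^sup>2 * phi x)"
    proof (cases "T + 1 < x")
      case True
      then have h: "1 \<le> x - \<alpha>" using assms by linarith
      have "1 * 1 \<le> (x - \<alpha>) * (x - \<alpha>)" by (rule mult_mono) (use h in auto)
      then have "1 \<le> (x - \<alpha>)^2" by (simp add: power2_eq_square)
      then have "1 * phi x \<le> (x - \<alpha>)^2 * phi x" by (intro mult_right_mono) (auto simp: less_imp_le[OF phi_pos])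
      then show ?thesis using True assms by (simp add: indicator_def)
    next
      case False
      then show ?thesis by (simp add: indicator_def less_imp_le[OF phi_pos])
    qed
  qed
  finally show ?thesis unfolding tsq_int .
qed

lemma tsq_upper: "tsq 1 c t \<le> 1 + c^2"
proof -
  have "tsq 1 c t \<le> (\<integral>x. (1 * x + c)^2 * phi x \<partial>lborel)"
    unfolding tsq_int
    by (rule integral_mono[OF int_sq_ind int_sq]) (auto simp: indicator_def less_imp_le[OF phi_pos])
  also have "\<dots> = 1 + c^2" using tot_sq[of 1 c] by simp
  finally show ?thesis .
qed

lemma KK_lower:
  assumes "\<alpha> - \<mu> \<le> T" "\<alpha> \<le> T"
  shows "Q (T + 1) \<le> KK \<mu> \<alpha>"
  using tsq_lower[OF assms] tsq_upper[of \<alpha> "-\<alpha> - \<mu>"] unfolding KK_def by simp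

lemma gap:
  assumes s1: "0 < \<sigma>1" and s12: "\<sigma>1 < \<sigma>2" and a: "\<alpha> \<le> A"
  shows "FF \<sigma>2 (\<alpha> * \<sigma>2) b - FF \<sigma>1 (\<alpha> * \<sigma>1) b \<ge> 2 * \<sigma>1 * (\<sigma>2 - \<sigma>1) * Q (A + \<bar>b\<bar> / \<sigma>1 + 1)"
proof -
  obtain z where z: "\<sigma>1 < z" "z < \<sigma>2"
    and eq: "FF \<sigma>2 (\<alpha> * \<sigma>2) b - FF \<sigma>1 (\<alpha> * \<sigma>1) b = (\<sigma>2 - \<sigma>1) * (2 * z * KK (b / z) \<alpha>)"
    using MVT2[OF s12, of "\<lambda>s. FF s (\<alpha> * s) b" "\<lambda>s. 2 * s * KK (b / s) \<alpha>"] G_deriv s1 by force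
  have zp: "z > 0" using z s1 by simp
  have "\<bar>b\<bar> / z \<le> \<bar>b\<bar> / \<sigma>1" using z s1 by (intro divide_left_mono) auto
  moreover have "- (b / z) \<le> \<bar>b\<bar> / z" using zp by (simp add: divide_le_eq_1 abs_if) 
  moreover have "0 \<le> \<bar>b\<bar> / \<sigma>1" using s1 by simp
  ultimately have k: "Q (A + \<bar>b\<bar> / \<sigma>1 + 1) \<le> KK (b / z) \<alpha>"
    using a s1 by (intro KK_lower) linarith+
  have "2 * \<sigma>1 * Q (A + \<bar>b\<bar> / \<sigma>1 + 1) \<le> 2 * z * KK (b / z) \<alpha>"
    using k z Q_nonneg s1 by (intro mult_mono) auto
  then have "(\<sigma>2 - \<sigma>1) * (2 * \<sigma>1 * Q (A + \<bar>b\<bar> / \<sigma>1 + 1)) \<le> (\<sigma>2 - \<sigma>1) * (2 * z * KK (b / z) \<alpha>)"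
    using s12 by (intro mult_left_mono) auto
  then show ?thesis unfolding eq by (simp add: algebra_simps)
qed

lemma Mills_up: "t > 0 \<Longrightarrow> Q t < phi t / t"
proof -
  assume t: "t > 0"
  let ?u = "\<lambda>x. phi x / x - Q x"
  have "0 < ?u t"
  proof (rule DERIV_neg_imp_decreasing_at_top[where f="?u"])
    fix x assume x: "x \<ge> t"
    then have xp: "x > 0" using t by simp
    have "(?u has_real_derivative (- phi x / x^2)) (at x)"
      using xp by (auto intro!: derivative_eq_intros phi_deriv Q_deriv simp: field_simps power2_eq_square)
    moreover have "- phi x / x^2 < 0" using xp phi_pos[of x] by simp
    ultimately show "\<exists>y. (?u has_real_derivative y) (at x) \<and> y < 0" by blast
  next
    have "((\<lambda>x. phi x / x) \<longlongrightarrow> 0) at_top" unfolding phi_def' by real_asymp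
    then show "(?u \<longlongrightarrow> 0) at_top" using tendsto_diff[OF _ Q_lim] by fastforce
  qed
  then show ?thesis by simp
qed

lemma Mills_low: "t > 0 \<Longrightarrow> phi t * (1 / t - 1 / t^3) < Q t"
proof -
  assume t: "t > 0"
  let ?w = "\<lambda>x. Q x - phi x * (1 / x - 1 / x^3)"
  have "0 < ?w t"
  proof (rule DERIV_neg_imp_decreasing_at_top[where f="?w"])
    fix x assume x: "x \<ge> t"
    then have xp: "x > 0" using t by simp
    have "(?w has_real_derivative (- 3 * phi x / x^4)) (at x)"
      using xp by (auto intro!: derivative_eq_intros phi_deriv Q_deriv simp: field_simps eval_nat_numeral)
    moreover have "- 3 * phi x / x^4 < 0" using xp phi_pos[of x] by simp
    ultimately show "\<exists>y. (?w has_real_derivative y) (at x) \<and> y < 0" by blast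
  next
    have "((\<lambda>x. phi x * (1 / x - 1 / x^3)) \<longlongrightarrow> 0) at_top" unfolding phi_def' by real_asymp
    then show "(?w \<longlongrightarrow> 0) at_top" using tendsto_diff[OF Q_lim] by fastforce
  qed
  then show ?thesis by simp
qed

lemma Mills_K: "a > 0 \<Longrightarrow> (1 + a^2) * Q a - a * phi a < 2 * phi a / a^3"
proof -
  assume a: "a > 0"
  let ?v = "\<lambda>x. 2 * phi x / x^3 - ((1 + x^2) * Q x - x * phi x)"
  have "0 < ?v a"
  proof (rule DERIV_neg_imp_decreasing_at_top[where f="?v"])
    fix x assume x: "x \<ge> a"
    then have xp: "x > 0" using a by simp
    have "(?v has_real_derivative (- 2 * phi x / x^2 - 6 * phi x / x^4 - 2 * x * Q x + 2 * phi x)) (at x)"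
      using xp by (auto intro!: derivative_eq_intros phi_deriv Q_deriv tphi_deriv simp: field_simps eval_nat_numeral)
    moreover have "- 2 * phi x / x^2 - 6 * phi x / x^4 - 2 * x * Q x + 2 * phi x < 0"
    proof -
      have "x * (phi x * (1 / x - 1 / x^3)) < x * Q x" using Mills_low[OF xp] xp by simp
      moreover have "x * (phi x * (1 / x - 1 / x^3)) = phi x - phi x / x^2"
        using xp by (simp add: field_simps eval_nat_numeral)
      ultimately have "phi x - phi x / x^2 < x * Q x" by simp
      moreover have "0 < 6 * phi x / x^4" using xp phi_pos[of x] by simp
      ultimately show ?thesis by (simp add: field_simps)
    qed
    ultimately show "\<exists>y. (?v has_real_derivative y) (at x) \<and> y < 0" by blast
  next
    have l1: "((\<lambda>x. 2 * phi x / x^3) \<longlongrightarrow> 0) at_top" unfolding phi_def' by real_asymp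
    have l2: "((\<lambda>x. x * phi x) \<longlongrightarrow> 0) at_top" by (rule tphi_lim)
    have l3: "((\<lambda>x. (1 + x^2) * Q x) \<longlongrightarrow> 0) at_top"
    proof (rule tendsto_sandwich[where f="\<lambda>_. 0" and h="\<lambda>x. (1 + x^2) * (phi x / x)"])
      show "\<forall>\<^sub>F n in at_top. 0 \<le> (1 + n\<^sup>2) * Q n" by (simp add: Q_nonneg)
      show "\<forall>\<^sub>F n in at_top. (1 + n\<^sup>2) * Q n \<le> (1 + n\<^sup>2) * (phi n / n)"
        using eventually_gt_at_top[of "0::real"]
      proof eventually_elim
        fix n :: real assume "0 < n"
        then have "Q n \<le> phi n / n" using Mills_up[of n] by simp
        then show "(1 + n\<^sup>2) * Q n \<le> (1 + n\<^sup>2) * (phi n / n)"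
          by (rule mult_left_mono) (simp add: add_nonneg_nonneg)
      qed
      show "((\<lambda>x. (1 + x\<^sup>2) * (phi x / x)) \<longlongrightarrow> 0) at_top" unfolding phi_def' by real_asymp
    qed simp
    show "(?v \<longlongrightarrow> 0) at_top" using tendsto_diff[OF l1 tendsto_diff[OF l3 l2]] by simp
  qed
  then show ?thesis by simp
qed

lemma tsq_refl: "tsq 1 c (-t) = 1 + c^2 - tsq 1 (-c) t"
  unfolding tsq_def by (simp add: Q_sym phi_even algebra_simps)

lemma rho_even: "rho (-\<mu>) \<alpha> = rho \<mu> \<alpha>"
proof -
  have h1: "tsq 1 (-\<alpha>) (\<alpha> + \<mu>) = 1 + \<alpha>^2 - tsq 1 \<alpha> (-\<alpha> - \<mu>)"
    using tsq_refl[of "-\<alpha>" "-\<alpha>-\<mu>"] by (simp add: add.commute)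
  have h3: "tsq 1 \<alpha> (\<mu> - \<alpha>) = 1 + \<alpha>^2 - tsq 1 (-\<alpha>) (\<alpha> - \<mu>)"
    using tsq_refl[of \<alpha> "\<alpha> - \<mu>"] by simp
  have q1: "Q (\<alpha> + \<mu>) = 1 - Q (-\<alpha> - \<mu>)" using Q_sym[of "-\<alpha>-\<mu>"] by (simp add: add.commute)
  have q3: "Q (\<mu> - \<alpha>) = 1 - Q (\<alpha> - \<mu>)" using Q_sym[of "\<alpha>-\<mu>"] by simp
  have "rho (-\<mu>) \<alpha> = 1 + \<alpha>^2 + tsq 1 (-\<alpha>) (\<alpha> + \<mu>) - \<mu>^2 * Q (\<alpha> + \<mu>) - tsq 1 \<alpha> (\<mu> - \<alpha>) + \<mu>^2 * Q (\<mu> - \<alpha>)"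
    unfolding rho_def by (simp add: algebra_simps)
  also have "\<dots> = rho \<mu> \<alpha>" unfolding h1 h3 q1 q3 rho_def by (simp add: algebra_simps)
  finally show ?thesis .
qed

definition gg :: "real \<Rightarrow> real \<Rightarrow> real" where
  "gg m \<alpha> = m^2 - rho m \<alpha>"

lemma gg_even: "gg (-m) \<alpha> = gg m \<alpha>"
  unfolding gg_def by (simp add: rho_even)

lemma gg_abs: "gg \<bar>m\<bar> \<alpha> = gg m \<alpha>"
  by (cases "m \<ge> 0") (auto simp: gg_even)

lemma gg_deriv: "((\<lambda>m. gg m \<alpha>) has_real_derivative 2 * \<mu> * (Q (\<alpha> + \<mu>) + Q (\<alpha> - \<mu>))) (at \<mu>)"
proof -
  have "((\<lambda>m. gg m \<alpha>) has_real_derivative 2 * \<mu> - 2 * \<mu> * (Q (-\<alpha> - \<mu>) - Q (\<alpha> - \<mu>))) (at \<mu>)"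
    unfolding gg_def by (rule DERIV_diff[OF _ rho_deriv]) (auto intro!: derivative_eq_intros)
  moreover have "Q (-\<alpha> - \<mu>) = 1 - Q (\<alpha> + \<mu>)" using Q_sym[of "\<alpha> + \<mu>"] by simp
  ultimately show ?thesis by (simp add: algebra_simps)
qed

lemma gg_mono: "0 \<le> x \<Longrightarrow> x \<le> y \<Longrightarrow> gg x \<alpha> \<le> gg y \<alpha>"
  by (rule DERIV_nonneg_imp_nondecreasing[of x y])
     (auto intro!: exI[of _ "2 * _ * (Q (\<alpha> + _) + Q (\<alpha> - _))"] gg_deriv simp: add_nonneg_nonneg Q_nonneg)

lemma tsqK: "tsq 1 (-\<alpha>) \<alpha> = (1 + \<alpha>^2) * Q \<alpha> - \<alpha> * phi \<alpha>"
  unfolding tsq_def by (simp add: algebra_simps power2_eq_square)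

lemma gg0: "gg 0 \<alpha> = - 2 * ((1 + \<alpha>^2) * Q \<alpha> - \<alpha> * phi \<alpha>)"
proof -
  have "tsq 1 \<alpha> (-\<alpha>) = 1 + \<alpha>^2 - tsq 1 (-\<alpha>) \<alpha>" using tsq_refl[of \<alpha> \<alpha>] by simp
  then show ?thesis unfolding gg_def rho_def tsqK[symmetric] by simp
qed

lemma Q_half:
  assumes m: "\<mu> > 0" and a: "\<alpha> \<ge> \<mu>"
  shows "Q (\<alpha> - \<mu> / 2) \<ge> \<mu> / 2 * phi \<alpha>"
proof -
  obtain z where z: "\<alpha> - \<mu>/2 < z" "z < \<alpha>" and eq: "Q \<alpha> - Q (\<alpha> - \<mu>/2) = (\<alpha> - (\<alpha> - \<mu>/2)) * (- phi z)"
    using MVT2[of "\<alpha> - \<mu>/2" \<alpha> Q "\<lambda>x. - phi x"] Q_deriv m by force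
  have "phi \<alpha> \<le> phi z" using z m a by (intro phi_mono) auto
  then have "\<mu> / 2 * phi \<alpha> \<le> \<mu> / 2 * phi z" using m by simp
  then show ?thesis using eq Q_nonneg[of \<alpha>] by simp
qed

lemma gg_low:
  assumes m: "\<mu> > 0" and a: "\<alpha> \<ge> \<mu>"
  shows "gg \<mu> \<alpha> \<ge> gg 0 \<alpha> + \<mu>^3 * phi \<alpha> / 4"
proof -
  obtain z where z: "\<mu>/2 < z" "z < \<mu>" and eq: "gg \<mu> \<alpha> - gg (\<mu>/2) \<alpha> = (\<mu> - \<mu>/2) * (2 * z * (Q (\<alpha> + z) + Q (\<alpha> - z)))"
    using MVT2[of "\<mu>/2" \<mu> "\<lambda>m. gg m \<alpha>" "\<lambda>m. 2 * m * (Q (\<alpha> + m) + Q (\<alpha> - m))"] gg_deriv m by force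
  have "Q (\<alpha> - \<mu> / 2) \<le> Q (\<alpha> - z)" using z by (intro Q_mono) auto
  also have "\<dots> \<le> Q (\<alpha> + z) + Q (\<alpha> - z)" using Q_nonneg by simp
  finally have q: "\<mu> / 2 * phi \<alpha> \<le> Q (\<alpha> + z) + Q (\<alpha> - z)" using Q_half[OF m a] by simp
  have h: "\<mu> * (\<mu> / 2 * phi \<alpha>) \<le> 2 * z * (Q (\<alpha> + z) + Q (\<alpha> - z))"
    using z m q phi_pos[of \<alpha>] by (intro mult_mono) auto
  have "(\<mu> - \<mu>/2) * (\<mu> * (\<mu> / 2 * phi \<alpha>)) \<le> (\<mu> - \<mu>/2) * (2 * z * (Q (\<alpha> + z) + Q (\<alpha> - z)))"
    using m by (intro mult_left_mono[OF h]) simp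
  then have "\<mu>^3 * phi \<alpha> / 4 \<le> gg \<mu> \<alpha> - gg (\<mu>/2) \<alpha>" unfolding eq by (simp add: power3_eq_cube field_simps)
  moreover have "gg 0 \<alpha> \<le> gg (\<mu>/2) \<alpha>" using m by (intro gg_mono) auto
  ultimately show ?thesis by simp
qed

lemma exists_c:
  fixes p :: "real measure"
  assumes P: "prob_space p" and S: "sets p = sets borel" and nz: "measure p {b. b \<noteq> 0} \<noteq> 0"
  shows "\<exists>c>0. measure p {b. c \<le> \<bar>b\<bar>} > 0"
proof (rule ccontr)
  assume "\<not> ?thesis"
  then have z: "measure p {b. inverse (real (Suc i)) \<le> \<bar>b\<bar>} = 0" for i
    using measure_nonneg[of p "{b. inverse (real (Suc i)) \<le> \<bar>b\<bar>}"]
    by (metis inverse_positive_iff_positive of_nat_0_less_iff zero_less_Suc order_le_less)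
  interpret p: prob_space p by (rule P)
  have sets: "{b. inverse (real (Suc i)) \<le> \<bar>b\<bar>} \<in> sets p" for i
    unfolding S by measurable
  have "emeasure p (\<Union>i. {b. inverse (real (Suc i)) \<le> \<bar>b\<bar>}) = 0"
  proof (rule emeasure_UN_eq_0)
    fix i
    show "emeasure p {b. inverse (real (Suc i)) \<le> \<bar>b\<bar>} = 0" using z[of i] by (simp add: p.emeasure_eq_measure)
  next
    show "range (\<lambda>i. {b. inverse (real (Suc i)) \<le> \<bar>b\<bar>}) \<subseteq> sets p" using sets by auto
  qed
  moreover have "(\<Union>i. {b. inverse (real (Suc i)) \<le> \<bar>b\<bar>}) = {b. b \<noteq> 0}"
  proof -
    have ex: "\<exists>i. inverse (real (Suc i)) \<le> \<bar>x\<bar>" if "x \<noteq> 0" for x :: real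
    proof -
      have "0 < \<bar>x\<bar>" using that by simp
      from ex_inverse_of_nat_less[OF this] obtain n where "n > 0" "inverse (real n) < \<bar>x\<bar>" by auto
      then have "inverse (real (Suc (n - 1))) \<le> \<bar>x\<bar>" by simp
      then show ?thesis by blast
    qed
    show ?thesis using ex by auto
  qed
  ultimately have "measure p {b. b \<noteq> 0} = 0" by (simp add: measure_def)
  then show False using nz by simp
qed

lemma FF_lower:
  assumes s: "\<sigma> > 0" and t: "\<tau> \<ge> 0"
  shows "FF \<sigma> \<tau> b \<ge> b^2 * (1 - Q ((\<tau> - b)/\<sigma>) - Q ((\<tau> + b)/\<sigma>))"
proof -
  define \<alpha> where "\<alpha> = \<tau> / \<sigma>"
  define \<mu> where "\<mu> = b / \<sigma>"
  have tau: "\<tau> = \<alpha> * \<sigma>" using s by (simp add: \<alpha>_def)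
  have FFe: "FF \<sigma> \<tau> b = \<sigma>^2 * rho \<mu> \<alpha>" unfolding tau \<mu>_def by (rule FF_scale[OF s])
  have r: "rho \<mu> \<alpha> = KK \<mu> \<alpha> + \<mu>^2 * (Q (-\<alpha> - \<mu>) - Q (\<alpha> - \<mu>))"
    unfolding rho_def KK_def by (simp add: algebra_simps)
  have k: "KK \<mu> \<alpha> \<ge> 0"
    using KK_lower[of \<alpha> \<mu> "max (\<alpha> - \<mu>) \<alpha>"] Q_nonneg[of "max (\<alpha> - \<mu>) \<alpha> + 1"] by simp
  have q: "Q (-\<alpha> - \<mu>) = 1 - Q (\<alpha> + \<mu>)" using Q_sym[of "\<alpha> + \<mu>"] by simp
  have e1: "\<alpha> - \<mu> = (\<tau> - b)/\<sigma>" by (simp add: \<alpha>_def \<mu>_def diff_divide_distrib)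
  have e2: "\<alpha> + \<mu> = (\<tau> + b)/\<sigma>" by (simp add: \<alpha>_def \<mu>_def add_divide_distrib)
  have bb: "\<sigma>^2 * \<mu>^2 = b^2" using s by (simp add: \<mu>_def power_divide)
  have "FF \<sigma> \<tau> b = \<sigma>^2 * KK \<mu> \<alpha> + b^2 * (1 - Q (\<alpha> + \<mu>) - Q (\<alpha> - \<mu>))"
    unfolding FFe r q using bb by (simp add: algebra_simps)
  moreover have "\<sigma>^2 * KK \<mu> \<alpha> \<ge> 0" using k by simp
  ultimately show ?thesis unfolding e1 e2 by (simp add: algebra_simps)
qed

lemma low_lim:
  fixes p :: "real measure"
  assumes P: "prob_space p" and S: "sets p = sets borel" and I: "integrable p (\<lambda>b. b^2)" and s: "\<sigma> > 0"
  shows "((\<lambda>t. \<integral>b. b^2 * (1 - Q ((t - b)/\<sigma>) - Q ((t + b)/\<sigma>)) \<partial>p) \<longlongrightarrow> (\<integral>b. b^2 \<partial>p)) at_top"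
proof (rule integral_dominated_convergence_at_top[where w="\<lambda>b. b^2"])
  show "(\<lambda>b. b^2) \<in> borel_measurable p" using S by measurable
  show "(\<lambda>b. b^2 * (1 - Q ((t - b)/\<sigma>) - Q ((t + b)/\<sigma>))) \<in> borel_measurable p" for t
    using S by measurable
  show "integrable p (\<lambda>b. b^2)" by (rule I)
  show "AE x in p. ((\<lambda>t. x^2 * (1 - Q ((t - x)/\<sigma>) - Q ((t + x)/\<sigma>))) \<longlongrightarrow> x^2) at_top"
  proof (rule AE_I2)
    fix x :: real
    have f1: "filterlim (\<lambda>t. (t - x)/\<sigma>) at_top at_top" using s by real_asymp
    have f2: "filterlim (\<lambda>t. (t + x)/\<sigma>) at_top at_top" using s by real_asymp
    have "((\<lambda>t. x^2 * (1 - Q ((t - x)/\<sigma>) - Q ((t + x)/\<sigma>))) \<longlongrightarrow> x^2 * (1 - 0 - 0)) at_top"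
      by (intro tendsto_intros filterlim_compose[OF Q_lim f1] filterlim_compose[OF Q_lim f2])
    then show "((\<lambda>t. x^2 * (1 - Q ((t - x)/\<sigma>) - Q ((t + x)/\<sigma>))) \<longlongrightarrow> x^2) at_top" by simp
  qed
  show "\<forall>\<^sub>F i in at_top. AE x in p. norm (x^2 * (1 - Q ((i - x)/\<sigma>) - Q ((i + x)/\<sigma>))) \<le> x^2"
  proof (intro always_eventually allI AE_I2)
    fix i x :: real
    have "\<bar>1 - Q ((i - x)/\<sigma>) - Q ((i + x)/\<sigma>)\<bar> \<le> 1"
      using Q_nonneg[of "(i - x)/\<sigma>"] Q_nonneg[of "(i + x)/\<sigma>"] Q_le1[of "(i - x)/\<sigma>"] Q_le1[of "(i + x)/\<sigma>"]
      by linarith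
    then show "norm (x^2 * (1 - Q ((i - x)/\<sigma>) - Q ((i + x)/\<sigma>))) \<le> x^2"
      by (simp add: abs_mult mult_left_le)
  qed
qed

lemma exists_good:
  fixes p :: "real measure"
  assumes P: "prob_space p" and S: "sets p = sets borel" and I: "integrable p (\<lambda>b. b^2)"
    and s: "\<sigma> > 0" and c: "c > 0" and pi: "measure p {b. c \<le> \<bar>b\<bar>} > 0"
  shows "\<exists>\<tau>\<ge>0. risk p \<sigma> \<tau> < (\<integral>b. b^2 \<partial>p)"
proof -
  interpret p: prob_space p by (rule P)
  have sp: "space p = UNIV" using sets_eq_imp_space_eq[OF S] by simp
  define \<pi> where "\<pi> = measure p {b. c \<le> \<bar>b\<bar>}"
  define \<mu> where "\<mu> = c / \<sigma>"
  have mu: "\<mu> > 0" using s c by (simp add: \<mu>_def)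
  have pip: "\<pi> > 0" using pi by (simp add: \<pi>_def)
  define \<alpha> where "\<alpha> = max \<mu> (max 1 (16 / (\<mu>^3 * \<pi>)))"
  have a1: "\<alpha> \<ge> \<mu>" "\<alpha> \<ge> 1" "\<alpha> \<ge> 16 / (\<mu>^3 * \<pi>)" by (auto simp: \<alpha>_def)
  have ap: "\<alpha> > 0" using a1 by simp
  define K where "K = (1 + \<alpha>^2) * Q \<alpha> - \<alpha> * phi \<alpha>"
  have g0: "gg 0 \<alpha> = - 2 * K" by (simp add: gg0 K_def)
  have Kb: "K < 2 * phi \<alpha> / \<alpha>^3" unfolding K_def by (rule Mills_K[OF ap])
  define D where "D = \<mu>^3 * phi \<alpha> / 4"
  define A where "A = {b::real. c \<le> \<bar>b\<bar>}"
  have point: "FF \<sigma> (\<alpha> * \<sigma>) b \<le> b^2 + \<sigma>^2 * (2 * K) - \<sigma>^2 * D * indicator A b" for b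
  proof -
    have "FF \<sigma> (\<alpha> * \<sigma>) b = b^2 - \<sigma>^2 * gg (b / \<sigma>) \<alpha>"
      unfolding FF_scale[OF s] gg_def using s by (simp add: power_divide algebra_simps)
    then have FFe: "FF \<sigma> (\<alpha> * \<sigma>) b = b^2 - \<sigma>^2 * gg \<bar>b / \<sigma>\<bar> \<alpha>"
      using gg_abs[of "b / \<sigma>" \<alpha>] by simp
    have g1: "gg \<bar>b / \<sigma>\<bar> \<alpha> \<ge> gg 0 \<alpha>" by (rule gg_mono) auto
    show ?thesis
    proof (cases "b \<in> A")
      case True
      then have "\<mu> \<le> \<bar>b / \<sigma>\<bar>" using s by (simp add: A_def \<mu>_def divide_right_mono abs_div)
      then have "gg \<mu> \<alpha> \<le> gg \<bar>b / \<sigma>\<bar> \<alpha>" using mu by (intro gg_mono) auto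
      moreover have "gg \<mu> \<alpha> \<ge> gg 0 \<alpha> + \<mu>^3 * phi \<alpha> / 4" by (rule gg_low[OF mu a1(1)])
      ultimately have "gg \<bar>b / \<sigma>\<bar> \<alpha> \<ge> - 2 * K + D" using g0 by (simp add: D_def)
      then have "\<sigma>^2 * (- 2 * K + D) \<le> \<sigma>^2 * gg \<bar>b / \<sigma>\<bar> \<alpha>" by (intro mult_left_mono) auto
      then show ?thesis unfolding FFe using True by (simp add: algebra_simps)
    next
      case False
      have "\<sigma>^2 * (- 2 * K) \<le> \<sigma>^2 * gg \<bar>b / \<sigma>\<bar> \<alpha>" using g1 g0 by (intro mult_left_mono) auto
      then show ?thesis unfolding FFe using False by (simp add: algebra_simps)
    qed
  qed
  have Ameas: "A \<in> sets p" unfolding S A_def by measurable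
  have iA: "integrable p (indicator A :: real \<Rightarrow> real)"
    using Ameas by (intro integrable_real_indicator) (auto simp: p.emeasure_eq_measure)
  have iR: "integrable p (\<lambda>b. b^2 + \<sigma>^2 * (2 * K) - \<sigma>^2 * D * indicator A b)"
    using I iA by auto
  have t0: "\<alpha> * \<sigma> \<ge> 0" using ap s by simp
  have "risk p \<sigma> (\<alpha> * \<sigma>) = (\<integral>b. FF \<sigma> (\<alpha> * \<sigma>) b \<partial>p)" by (rule risk_eq(2)[OF P S I s t0])
  also have "\<dots> \<le> (\<integral>b. b^2 + \<sigma>^2 * (2 * K) - \<sigma>^2 * D * indicator A b \<partial>p)"
    by (rule integral_mono[OF risk_eq(1)[OF P S I s t0] iR point])
  also have "\<dots> = (\<integral>b. b^2 \<partial>p) + \<sigma>^2 * (2 * K) - \<sigma>^2 * D * \<pi>"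
  proof -
    have "(\<integral>b. b^2 + \<sigma>^2 * (2 * K) - \<sigma>^2 * D * indicator A b \<partial>p)
       = (\<integral>b. b^2 + \<sigma>^2 * (2 * K) \<partial>p) - (\<integral>b. \<sigma>^2 * D * indicator A b \<partial>p)"
      by (rule Bochner_Integration.integral_diff) (use I iA in auto)
    also have "(\<integral>b. b^2 + \<sigma>^2 * (2 * K) \<partial>p) = (\<integral>b. b^2 \<partial>p) + \<sigma>^2 * (2 * K)"
      using I by (simp add: p.prob_space)
    also have "(\<integral>b. \<sigma>^2 * D * indicator A b \<partial>p) = \<sigma>^2 * D * \<pi>"
      by (simp add: sp \<pi>_def A_def)
    finally show ?thesis .
  qed
  also have "\<dots> < (\<integral>b. b^2 \<partial>p)"
  proof -
    have "\<alpha> \<le> \<alpha>^3" using a1(2) by (simp add: power3_eq_cube) (metis mult_le_cancel_left1 mult_le_one not_less one_le_power power2_eq_square less_le_trans zero_less_one)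
    then have "16 / (\<mu>^3 * \<pi>) \<le> \<alpha>^3" using a1(3) by linarith
    then have h16: "16 \<le> \<alpha>^3 * (\<mu>^3 * \<pi>)" using mu pip by (simp add: divide_le_eq)
    have "2 * K < 4 * phi \<alpha> / \<alpha>^3" using Kb by simp
    also have "4 * phi \<alpha> / \<alpha>^3 \<le> D * \<pi>"
    proof -
      have "4 * phi \<alpha> * 4 \<le> phi \<alpha> * (\<alpha>^3 * (\<mu>^3 * \<pi>))"
        using h16 phi_pos[of \<alpha>] by (simp add: mult_left_mono)
      then show ?thesis using ap unfolding D_def by (simp add: field_simps)
    qed
    finally have "2 * K < D * \<pi>" .
    then have "\<sigma>^2 * (2 * K) < \<sigma>^2 * (D * \<pi>)" using s by simp
    then show ?thesis by simp
  qed
  finally show ?thesis using t0 by blast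
qed

theorem lemma11:
  fixes p :: "real measure"
  assumes "prob_space p"
    and "sets p = sets borel"
    and "integrable p (\<lambda>b. b\<^sup>2)"
    and "prob_space.prob p {b. b \<noteq> 0} \<noteq> 0"
  shows "strict_mono_on {0<..} (\<lambda>\<sigma>. INF \<tau>\<in>{0..}. risk p \<sigma> \<tau>)"
proof (rule strict_mono_onI)
  note P = assms(1) and S = assms(2) and I = assms(3)
  interpret p: prob_space p by (rule P)
  fix \<sigma>1 \<sigma>2 :: real
  assume "\<sigma>1 \<in> {0<..}" "\<sigma>2 \<in> {0<..}" and s12: "\<sigma>1 < \<sigma>2"
  then have s1: "\<sigma>1 > 0" and s2: "\<sigma>2 > 0" by auto
  have sp: "space p = UNIV" using sets_eq_imp_space_eq[OF S] by simp
  have nn: "risk p \<sigma> \<tau> \<ge> 0" if "\<sigma> > 0" "\<tau> \<ge> 0" for \<sigma> \<tau>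
    unfolding risk_eq(2)[OF P S I that] using FF_nonneg[OF that] by (intro integral_nonneg_AE) auto
  have bdd: "bdd_below ((\<lambda>\<tau>. risk p \<sigma> \<tau>) ` {0..})" if "\<sigma> > 0" for \<sigma>
    using nn[OF that] by (intro bdd_belowI[where m=0]) auto
  have "measure p {b. b \<noteq> 0} \<noteq> 0" using assms(4) by simp
  then obtain c where c: "c > 0" "measure p {b. c \<le> \<bar>b\<bar>} > 0" using exists_c[OF P S] by blast
  obtain \<tau>s where ts: "\<tau>s \<ge> 0" "risk p \<sigma>2 \<tau>s < (\<integral>b. b^2 \<partial>p)"
    using exists_good[OF P S I s2 c] by blast
  let ?L = "\<lambda>t. \<integral>b. b^2 * (1 - Q ((t - b)/\<sigma>2) - Q ((t + b)/\<sigma>2)) \<partial>p"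
  have "\<forall>\<^sub>F t in at_top. risk p \<sigma>2 \<tau>s < ?L t"
    by (rule order_tendstoD(1)[OF low_lim[OF P S I s2] ts(2)])
  then obtain N where N: "\<And>t. t \<ge> N \<Longrightarrow> risk p \<sigma>2 \<tau>s < ?L t"
    by (auto simp: eventually_at_top_linorder)
  define T where "T = max N \<tau>s"
  have T0: "T \<ge> 0" using ts by (simp add: T_def)
  have big: "risk p \<sigma>2 \<tau>s < risk p \<sigma>2 \<tau>" if "\<tau> > T" for \<tau>
  proof -
    have t0: "\<tau> \<ge> 0" using that T0 by simp
    have "risk p \<sigma>2 \<tau>s < ?L \<tau>" using N[of \<tau>] that by (simp add: T_def)
    also have "?L \<tau> \<le> (\<integral>b. FF \<sigma>2 \<tau> b \<partial>p)"
    proof (rule integral_mono)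
      show "integrable p (\<lambda>b. b^2 * (1 - Q ((\<tau> - b)/\<sigma>2) - Q ((\<tau> + b)/\<sigma>2)))"
      proof (rule Bochner_Integration.integrable_bound[OF I])
        show "(\<lambda>b. b^2 * (1 - Q ((\<tau> - b)/\<sigma>2) - Q ((\<tau> + b)/\<sigma>2))) \<in> borel_measurable p"
          using S by measurable
        show "AE x in p. norm (x^2 * (1 - Q ((\<tau> - x)/\<sigma>2) - Q ((\<tau> + x)/\<sigma>2))) \<le> norm (x^2)"
        proof (rule AE_I2)
          fix x :: real
          have "\<bar>1 - Q ((\<tau> - x)/\<sigma>2) - Q ((\<tau> + x)/\<sigma>2)\<bar> \<le> 1"
            using Q_nonneg[of "(\<tau> - x)/\<sigma>2"] Q_nonneg[of "(\<tau> + x)/\<sigma>2"] Q_le1[of "(\<tau> - x)/\<sigma>2"] Q_le1[of "(\<tau> + x)/\<sigma>2"]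
            by linarith
          then show "norm (x^2 * (1 - Q ((\<tau> - x)/\<sigma>2) - Q ((\<tau> + x)/\<sigma>2))) \<le> norm (x^2)"
            by (simp add: abs_mult mult_left_le)
        qed
      qed
      show "integrable p (FF \<sigma>2 \<tau>)" by (rule risk_eq(1)[OF P S I s2 t0])
      show "b^2 * (1 - Q ((\<tau> - b)/\<sigma>2) - Q ((\<tau> + b)/\<sigma>2)) \<le> FF \<sigma>2 \<tau> b" for b
        by (rule FF_lower[OF s2 t0])
    qed
    also have "\<dots> = risk p \<sigma>2 \<tau>" by (rule risk_eq(2)[OF P S I s2 t0, symmetric])
    finally show ?thesis .
  qed
  define A where "A = T / \<sigma>2"
  define d where "d b = 2 * \<sigma>1 * (\<sigma>2 - \<sigma>1) * Q (A + \<bar>b\<bar> / \<sigma>1 + 1)" for b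
  have dm: "d \<in> borel_measurable p" unfolding d_def using S by measurable
  have id: "integrable p d"
  proof (rule Bochner_Integration.integrable_bound[OF p.integrable_const[of "2 * \<sigma>1 * (\<sigma>2 - \<sigma>1)"] dm])
    show "AE x in p. norm (d x) \<le> norm (2 * \<sigma>1 * (\<sigma>2 - \<sigma>1))"
    proof (rule AE_I2)
      fix x
      have "0 \<le> 2 * \<sigma>1 * (\<sigma>2 - \<sigma>1)" using s1 s12 by simp
      moreover have "Q (A + \<bar>x\<bar> / \<sigma>1 + 1) \<le> 1" by (rule Q_le1)
      moreover have "Q (A + \<bar>x\<bar> / \<sigma>1 + 1) \<ge> 0" by (rule Q_nonneg)
      ultimately show "norm (d x) \<le> norm (2 * \<sigma>1 * (\<sigma>2 - \<sigma>1))"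
        unfolding d_def by (simp add: abs_mult mult_left_le)
    qed
  qed
  define \<delta> where "\<delta> = (\<integral>b. d b \<partial>p)"
  have dpos: "\<delta> > 0"
  proof -
    have "(\<integral>b. 0 \<partial>p) < (\<integral>b. d b \<partial>p)"
    proof (rule p.integral_less_AE_space)
      show "AE x in p. 0 < d x" using s1 s12 Q_pos by (auto simp: d_def)
    qed (use id p.emeasure_space_1 in auto)
    then show ?thesis by (simp add: \<delta>_def)
  qed
  let ?I1 = "INF \<tau>\<in>{0..}. risk p \<sigma>1 \<tau>"
  have small: "?I1 + \<delta> \<le> risk p \<sigma>2 \<tau>" if "0 \<le> \<tau>" "\<tau> \<le> T" for \<tau>
  proof -
    define \<alpha> where "\<alpha> = \<tau> / \<sigma>2"
    have a0: "\<alpha> \<ge> 0" using that s2 by (simp add: \<alpha>_def)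
    have aA: "\<alpha> \<le> A" using that s2 by (simp add: \<alpha>_def A_def divide_right_mono)
    have tau: "\<tau> = \<alpha> * \<sigma>2" using s2 by (simp add: \<alpha>_def)
    have t1: "\<alpha> * \<sigma>1 \<ge> 0" using a0 s1 by simp
    have "?I1 \<le> risk p \<sigma>1 (\<alpha> * \<sigma>1)"
      by (rule cINF_lower[OF bdd[OF s1]]) (use t1 in simp)
    also have "\<dots> = (\<integral>b. FF \<sigma>1 (\<alpha> * \<sigma>1) b \<partial>p)" by (rule risk_eq(2)[OF P S I s1 t1])
    also have "\<dots> \<le> (\<integral>b. FF \<sigma>2 (\<alpha> * \<sigma>2) b - d b \<partial>p)"
    proof (rule integral_mono)
      show "integrable p (\<lambda>b. FF \<sigma>1 (\<alpha> * \<sigma>1) b)" using risk_eq(1)[OF P S I s1 t1] by simp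
      show "integrable p (\<lambda>b. FF \<sigma>2 (\<alpha> * \<sigma>2) b - d b)"
        using risk_eq(1)[OF P S I s2 that(1)] id unfolding tau by auto
      show "FF \<sigma>1 (\<alpha> * \<sigma>1) b \<le> FF \<sigma>2 (\<alpha> * \<sigma>2) b - d b" for b
        using gap[OF s1 s12 aA, of b] by (simp add: d_def)
    qed
    also have "\<dots> = (\<integral>b. FF \<sigma>2 (\<alpha> * \<sigma>2) b \<partial>p) - \<delta>"
      unfolding \<delta>_def
      by (rule Bochner_Integration.integral_diff) (use risk_eq(1)[OF P S I s2 that(1)] id tau in auto)
    also have "(\<integral>b. FF \<sigma>2 (\<alpha> * \<sigma>2) b \<partial>p) = risk p \<sigma>2 \<tau>"
      using risk_eq(2)[OF P S I s2 that(1)] tau by simp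
    finally show ?thesis by simp
  qed
  have all: "?I1 + \<delta> \<le> risk p \<sigma>2 \<tau>" if "\<tau> \<in> {0..}" for \<tau>
  proof (cases "\<tau> \<le> T")
    case True then show ?thesis using small that by simp
  next
    case False
    have "?I1 + \<delta> \<le> risk p \<sigma>2 \<tau>s" using small[of \<tau>s] ts(1) by (simp add: T_def)
    also have "\<dots> < risk p \<sigma>2 \<tau>" using big False by simp
    finally show ?thesis by simp
  qed
  have "?I1 + \<delta> \<le> (INF \<tau>\<in>{0..}. risk p \<sigma>2 \<tau>)"
    by (rule cINF_greatest) (use all in auto)
  then show "?I1 < (INF \<tau>\<in>{0..}. risk p \<sigma>2 \<tau>)" using dpos by simp
qed

end
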